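(* Let $\mathcal{A}=\mathcal{A}_1+\dots+\mathcal{A}_R$ be a structured block term decomposition in $\mathbb{R}^{n_1\times\dots\times n_D}$, with $\mathcal{A}_r\in\mathcal{M}_r^{n_1,\dots,n_D}$ for Tucker core structures $\mathcal{M}_r\subseteq\mathbb{R}^{l_1^r\times\dots\times l_D^r}$, and with each $\mathcal{A}_r=(U_1^r,\dots,U_D^r)\cdot\mathcal{C}_r$ in compact HOSVD form. Assume that $(U_d^{r_1})^TU_d^{r_2}=0$ for every $d=1,\dots,D$ and every $r_1\neq r_2$. Then $\kappa^{\mathrm{SBTD}}(\mathcal{A}_1,\dots,\mathcal{A}_R)=1$.
   Context: For matrices $A_d\in\mathbb{R}^{k_d\times l_d}$ and $\mathcal{C}=(c_{i_1\dots i_D})$, $(A_1,\dots,A_D)\cdot\mathcal{C}:=\sum c_{i_1\dots i_D}(A_1e_{i_1})\otimes\dots\otimes(A_De_{i_D})$. $\mathbb{R}^{n\times l}_\star$ denotes real $n\times l$ matrices of rank $l$. A Tucker core structure is a smooth submanifold $\mathcal{M}\subseteq\mathbb{R}^{l_1\times\dots\times l_D}$ such that every $\mathcal{C}\in\mathcal{M}$ has multilinear rank $(l_1,\dots,l_D)$ and $(A_1,\dots,A_D)\cdot\mathcal{C}\in\mathcal{M}$ for all $A_d\in\mathrm{GL}(l_d)$. Its structured Tucker manifold is $\mathcal{M}^{n_1,\dots,n_D}:=\{(U_1,\dots,U_D)\cdot\mathcal{C}:\mathcal{C}\in\mathcal{M},U_d\in\mathbb{R}^{n_d\times l_d}_\star\}$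 (a smooth embedded submanifold of $\mathbb{R}^{n_1\times\dots\times n_D}$). A compact HOSVD of $\mathcal{X}$ is $\mathcal{X}=(U_1,\dots,U_D)\cdot\mathcal{C}$ with each $U_d$ having orthonormal columns that are left singular vectors of the $d$-th unfolding $\mathcal{X}_{(d)}$ for its nonzero singular values, and $\mathcal{C}=(U_1^T,\dots,U_D^T)\cdot\mathcal{X}$. Condition number: for $\mathcal{A}_r\in\mathcal{M}_r^{n_1,\dots,n_D}$, let $T_r$ be a matrix whose columns form an orthonormal basis of the (vectorized) tangent space $T_{\mathcal{A}_r}\mathcal{M}_r^{n_1,\dots,n_D}$, and let the Terracini matrix be $T=[T_1\ \cdots\ T_R]$ with $N$ columns. Then $\kappa^{\mathrm{SBTD}}(\mathcal{A}_1,\dots,\mathcal{A}_R):=1/\sigma_N(T)$, where $\sigma_N(T)$ is the $N$-th largest singular value (taken to be $0$ if $N$ exceeds the number of rows), and $1/0=\infty$. (This equals the condition number of the local inverse of the addition map $(\mathcal{A}_1,\dots,\mathcal{A}_R)\mapsto\sum_r\mathcal{A}_r$.) *)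

theory Defs
  imports "HOL-Analysis.Analysis"
begin

text \<open>All tensors of order D live in one ambient Euclidean space
  real^('d => 'i), where the finite type 'd indexes the D modes (D = CARD('d)) and
  the finite type 'i is a pool of row/column indices.  A tensor of shape
  n_1 x ... x n_D is an element supported on the box of index sets I d (card (I d) = n_d).
  Matrices are elements of real^'i^'i supported on a rectangle of index sets.\<close>

type_synonym ('d, 'i) tensor = "real ^ ('d \<Rightarrow> 'i)"

text \<open>Tensors supported on the box prod_d J d, i.e. the space R^(card J_1 x ... x card J_D).\<close>
definition box_space :: "('d::finite \<Rightarrow> 'i::finite set) \<Rightarrow> ('d, 'i) tensor set" where
  "box_space J = {X. \<forall>g. X $ g \<noteq> 0 \<longrightarrow> (\<forall>d. g d \<in> J d)}"

text \<open>Matrix supported on rows K and columns L (an element of R^(card K x card L)).\<close>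
definition mat_on :: "'i::finite set \<Rightarrow> 'i set \<Rightarrow> real^'i^'i \<Rightarrow> bool" where
  "mat_on K L A \<longleftrightarrow> (\<forall>i j. A $ i $ j \<noteq> 0 \<longrightarrow> i \<in> K \<and> j \<in> L)"

definition full_rank_mat :: "'i::finite set \<Rightarrow> 'i set \<Rightarrow> real^'i^'i \<Rightarrow> bool" where
  "full_rank_mat K L A \<longleftrightarrow> mat_on K L A \<and> rank A = card L"

definition gl_mat :: "'i::finite set \<Rightarrow> real^'i^'i \<Rightarrow> bool" where
  "gl_mat L A \<longleftrightarrow> mat_on L L A \<and> rank A = card L"

definition mlprod :: "('d::finite \<Rightarrow> real^'i::finite^'i) \<Rightarrow> ('d, 'i) tensor \<Rightarrow> ('d, 'i) tensor" where
  "mlprod A X = (\<chi> f. \<Sum>g\<in>UNIV. X $ g * (\<Prod>d\<in>UNIV. A d $ (f d) $ (g d)))"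

text \<open>d-th component of the multilinear rank: rank of the mode-d unfolding X_(d),
  i.e. dimension of the span of its columns (the mode-d fibres).\<close>
definition mlrank :: "('d::finite, 'i::finite) tensor \<Rightarrow> 'd \<Rightarrow> nat" where
  "mlrank X d = dim (span {(\<chi> i. X $ (g(d := i))) | g. True})"

text \<open>Gram matrix X_(d) X_(d)^T of the mode-d unfolding.\<close>
definition unfold_gram :: "('d::finite, 'i::finite) tensor \<Rightarrow> 'd \<Rightarrow> real^'i^'i" where
  "unfold_gram X d = (\<chi> i j. \<Sum>g\<in>{g. g d = i}. X $ g * X $ (g(d := j)))"

definition id_on :: "'i::finite set \<Rightarrow> real^'i^'i" where
  "id_on L = (\<chi> i j. if i = j \<and> i \<in> L then 1 else 0)"

text \<open>Compact HOSVD X = (U_1,...,U_D) . C of a tensor X of shape I, with U_d of size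
  n_d x l_d (rows I d, columns L d): orthonormal columns, each column a left singular
  vector of X_(d) for a nonzero singular value (unit eigenvector of X_(d) X_(d)^T with
  positive eigenvalue), and C = (U_1^T,...,U_D^T) . X.\<close>
definition compact_hosvd ::
  "('d::finite \<Rightarrow> 'i::finite set) \<Rightarrow> ('d \<Rightarrow> 'i set) \<Rightarrow> ('d \<Rightarrow> real^'i^'i)
     \<Rightarrow> ('d, 'i) tensor \<Rightarrow> ('d, 'i) tensor \<Rightarrow> bool" where
  "compact_hosvd I L U C X \<longleftrightarrow>
     (\<forall>d. mat_on (I d) (L d) (U d)
        \<and> transpose (U d) ** U d = id_on (L d)
        \<and> (\<forall>j\<in>L d. \<exists>s>0. unfold_gram X d *v column j (U d) = s *\<^sub>R column j (U d)))
     \<and> X = mlprod U C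
     \<and> C = mlprod (\<lambda>d. transpose (U d)) X"

text \<open>C-infinity maps on an open set: all iterated Frechet derivatives exist.
  Df vs x is the iterated derivative in directions vs at x.\<close>
definition smooth_on :: "'a::real_normed_vector set \<Rightarrow> ('a \<Rightarrow> 'b::real_normed_vector) \<Rightarrow> bool" where
  "smooth_on U f \<longleftrightarrow> open U \<and>
     (\<exists>Df :: 'a list \<Rightarrow> 'a \<Rightarrow> 'b.
        (\<forall>x\<in>U. Df [] x = f x) \<and>
        (\<forall>vs. \<forall>x\<in>U. (Df vs has_derivative (\<lambda>h. Df (h # vs) x)) (at x)))"

text \<open>Smooth embedded submanifold (slice-chart definition).\<close>
definition smooth_submanifold :: "'a::euclidean_space set \<Rightarrow> bool" where
  "smooth_submanifold M \<longleftrightarrow>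
     (\<forall>p\<in>M. \<exists>W W' (\<psi>::'a \<Rightarrow> 'a) S.
        open W \<and> p \<in> W \<and> open W' \<and> bij_betw \<psi> W W' \<and>
        smooth_on W \<psi> \<and> smooth_on W' (inv_into W \<psi>) \<and>
        subspace S \<and> \<psi> ` (M \<inter> W) = W' \<inter> S)"

definition tangent_space :: "'a::euclidean_space set \<Rightarrow> 'a \<Rightarrow> 'a set" where
  "tangent_space M p = {v. \<exists>(\<gamma>::real \<Rightarrow> 'a) e. e > 0 \<and> smooth_on {-e<..<e} \<gamma> \<and>
       \<gamma> ` {-e<..<e} \<subseteq> M \<and> \<gamma> 0 = p \<and> (\<gamma> has_vector_derivative v) (at 0)}"

text \<open>Tucker core structure M in R^(l_1 x ... x l_D), l_d = card (L d).\<close>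
definition tucker_core_structure :: "('d::finite \<Rightarrow> 'i::finite set) \<Rightarrow> ('d, 'i) tensor set \<Rightarrow> bool" where
  "tucker_core_structure L M \<longleftrightarrow>
     M \<subseteq> box_space L \<and> smooth_submanifold M \<and>
     (\<forall>C\<in>M. \<forall>d. mlrank C d = card (L d)) \<and>
     (\<forall>C\<in>M. \<forall>A. (\<forall>d. gl_mat (L d) (A d)) \<longrightarrow> mlprod A C \<in> M)"

definition structured_tucker ::
  "('d::finite, 'i::finite) tensor set \<Rightarrow> ('d \<Rightarrow> 'i set) \<Rightarrow> ('d \<Rightarrow> 'i set) \<Rightarrow> ('d, 'i) tensor set" where
  "structured_tucker M L I =
     {mlprod U C | U C. C \<in> M \<and> (\<forall>d. full_rank_mat (I d) (L d) (U d))}"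

text \<open>Smallest singular value sigma_N of the Terracini matrix T = [T_1 ... T_R], T_r having
  orthonormal columns spanning the r-th tangent space TS r:
  sigma_N(T) = min over unit coefficient vectors x = (x_1..x_R) of norm (sum_r T_r x_r);
  writing v_r = T_r x_r (so norm v_r = norm x_r) this is the infimum below
  (it is automatically 0 when N exceeds the number of rows).\<close>
definition terracini_sigma_min :: "nat \<Rightarrow> (nat \<Rightarrow> 'a::euclidean_space set) \<Rightarrow> real" where
  "terracini_sigma_min R TS =
     Inf {norm (\<Sum>r<R. v r) | v. (\<forall>r<R. v r \<in> TS r) \<and> (\<Sum>r<R. (norm (v r))\<^sup>2) = 1}"

text \<open>kappa^SBTD = 1 / sigma_N(T), with 1/0 = infinity.\<close>
definition kappa_sbtd :: "nat \<Rightarrow> (nat \<Rightarrow> 'a::euclidean_space set) \<Rightarrow> ereal" where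
  "kappa_sbtd R TS =
     (if terracini_sigma_min R TS = 0 then \<infinity> else ereal (1 / terracini_sigma_min R TS))"

end

theory Submission
  imports Defs
begin
lemma deriv_zero_if_quadratic:
  fixes g :: "real \<Rightarrow> real"
  assumes der: "(g has_real_derivative D) (at 0)" and g0: "g 0 = 0" and dpos: "\<delta> > 0"
    and bnd: "\<forall>t. \<bar>t\<bar> < \<delta> \<longrightarrow> \<bar>g t\<bar> \<le> c * t^2"
  shows "D = 0"
proof -
  have lim: "((\<lambda>t. g t / t) \<longlongrightarrow> D) (at 0)"
    using der by (simp add: has_field_derivative_iff g0)
  have ev0: "\<forall>t. t \<noteq> 0 \<and> dist t 0 < \<delta> \<longrightarrow> norm (g t / t) \<le> c * \<bar>t\<bar>"
  proof (intro allI impI)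
    fix t :: real assume "t \<noteq> 0 \<and> dist t 0 < \<delta>"
    then have t: "t \<noteq> 0" "\<bar>t\<bar> < \<delta>" by auto
    have "\<bar>g t\<bar> \<le> c * t^2" using bnd t by auto
    also have "\<dots> = (c * \<bar>t\<bar>) * \<bar>t\<bar>" by (simp add: power2_eq_square)
    finally have "\<bar>g t\<bar> / \<bar>t\<bar> \<le> c * \<bar>t\<bar>" using t by (simp add: divide_le_eq)
    then show "norm (g t / t) \<le> c * \<bar>t\<bar>" by simp
  qed
  have ev: "eventually (\<lambda>t. norm (g t / t) \<le> c * \<bar>t\<bar>) (at 0)"
    unfolding eventually_at using ev0 dpos by blast
  have "((\<lambda>t. c * \<bar>t\<bar>) \<longlongrightarrow> 0) (at (0::real))"
    by (rule tendsto_eq_intros | simp)+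
  then have "((\<lambda>t. g t / t) \<longlongrightarrow> 0) (at 0)" using Lim_null_comparison[OF ev] by blast
  then show ?thesis using lim tendsto_unique[OF at_neq_bot] by blast
qed

lemma coeff_bound:
  fixes u w :: "'j \<Rightarrow> 'b::real_inner" and a :: "'j \<Rightarrow> real"
  assumes fin: "finite J"
    and uu: "\<forall>j\<in>J. \<forall>k\<in>J. inner (u j) (u k) = (if j = k then 1 else 0)"
    and wsmall: "\<forall>j\<in>J. norm (w j) \<le> \<epsilon>"
    and eps: "real (card J) * \<epsilon> \<le> 1/2"
  shows "(\<Sum>j\<in>J. \<bar>a j\<bar>) \<le> 2 * real (card J) * norm (\<Sum>j\<in>J. a j *\<^sub>R (u j + w j))"
proof -
  define N where "N = norm (\<Sum>j\<in>J. a j *\<^sub>R (u j + w j))"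
  define m where "m = (\<Sum>j\<in>J. \<bar>a j\<bar>)"
  have nu: "\<forall>k\<in>J. norm (u k) = 1"
    using uu by (auto simp: norm_eq_sqrt_inner)
  have ak: "\<bar>a k\<bar> \<le> N + m * \<epsilon>" if k: "k \<in> J" for k
  proof -
    have "inner (u k) (\<Sum>j\<in>J. a j *\<^sub>R (u j + w j))
        = (\<Sum>j\<in>J. a j * inner (u k) (u j)) + (\<Sum>j\<in>J. a j * inner (u k) (w j))"
      by (simp add: inner_sum_right inner_add_right sum.distrib algebra_simps)
    also have "(\<Sum>j\<in>J. a j * inner (u k) (u j)) = a k"
    proof -
      have "(\<Sum>j\<in>J. a j * inner (u k) (u j)) = (\<Sum>j\<in>J. if k = j then a j else 0)"
        by (rule sum.cong) (use uu k in auto)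
      then show ?thesis using fin k by simp
    qed
    finally have eq: "a k = inner (u k) (\<Sum>j\<in>J. a j *\<^sub>R (u j + w j)) - (\<Sum>j\<in>J. a j * inner (u k) (w j))"
      by simp
    have "\<bar>inner (u k) (\<Sum>j\<in>J. a j *\<^sub>R (u j + w j))\<bar> \<le> N"
      using Cauchy_Schwarz_ineq2[of "u k"] nu k unfolding N_def by auto
    moreover have "\<bar>\<Sum>j\<in>J. a j * inner (u k) (w j)\<bar> \<le> m * \<epsilon>"
    proof -
      have "\<bar>\<Sum>j\<in>J. a j * inner (u k) (w j)\<bar> \<le> (\<Sum>j\<in>J. \<bar>a j * inner (u k) (w j)\<bar>)"
        by (rule sum_abs)
      also have "\<dots> \<le> (\<Sum>j\<in>J. \<bar>a j\<bar> * \<epsilon>)"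
      proof (rule sum_mono)
        fix j assume j: "j \<in> J"
        have "\<bar>inner (u k) (w j)\<bar> \<le> norm (u k) * norm (w j)" by (rule Cauchy_Schwarz_ineq2)
        also have "\<dots> \<le> \<epsilon>" using nu k wsmall j by auto
        finally show "\<bar>a j * inner (u k) (w j)\<bar> \<le> \<bar>a j\<bar> * \<epsilon>"
          by (simp add: abs_mult mult_left_mono)
      qed
      also have "\<dots> = m * \<epsilon>" by (simp add: m_def sum_distrib_right)
      finally show ?thesis .
    qed
    ultimately show ?thesis using eq by linarith
  qed
  have "m \<le> (\<Sum>k\<in>J. N + m * \<epsilon>)" unfolding m_def by (rule sum_mono) (use ak in \<open>simp add: m_def\<close>)
  also have "\<dots> = real (card J) * N + real (card J) * \<epsilon> * m" by (simp add: algebra_simps)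
  finally have "m \<le> real (card J) * N + real (card J) * \<epsilon> * m" .
  moreover have "m \<ge> 0" unfolding m_def by (simp add: sum_nonneg)
  moreover have "real (card J) * \<epsilon> * m \<le> m / 2" using eps \<open>m \<ge> 0\<close>
    by (metis mult_right_mono mult.commute times_divide_eq_right mult_1 divide_inverse inverse_eq_divide)
  ultimately have "m \<le> 2 * real (card J) * N" by linarith
  then show ?thesis unfolding m_def N_def .
qed

lemma key_analytic:
  fixes \<gamma> :: "real \<Rightarrow> 'a::euclidean_space" and \<Psi> :: "'j \<Rightarrow> 'a \<Rightarrow> 'b::euclidean_space"
    and \<Phi> :: "'a \<Rightarrow> 'b" and S :: "real \<Rightarrow> 'b set" and u :: "'j \<Rightarrow> 'b"
  assumes der: "(\<gamma> has_vector_derivative v) (at 0)"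
    and fin: "finite J"
    and lin\<Psi>: "\<forall>j\<in>J. linear (\<Psi> j)" and lin\<Phi>: "linear \<Phi>"
    and \<Psi>0: "\<forall>j\<in>J. \<Psi> j (\<gamma> 0) = u j" and \<Phi>0: "\<Phi> (\<gamma> 0) = 0"
    and xu: "\<forall>j\<in>J. inner x (u j) = 0"
    and uu: "\<forall>j\<in>J. \<forall>k\<in>J. inner (u j) (u k) = (if j = k then 1 else 0)"
    and e: "e > 0"
    and inS: "\<forall>t. \<bar>t\<bar> < e \<longrightarrow> dim (S t) \<le> card J \<and> (\<forall>j\<in>J. \<Psi> j (\<gamma> t) \<in> S t) \<and> \<Phi> (\<gamma> t) \<in> S t"
  shows "inner x (\<Phi> v) = 0"
proof -
  define l where "l = real (card J)"
  have "\<forall>j\<in>J. \<exists>B>0. \<forall>z. norm (\<Psi> j z) \<le> B * norm z"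
    using lin\<Psi> linear_bounded_pos by metis
  then obtain Bj where Bj: "\<forall>j\<in>J. Bj j > 0 \<and> (\<forall>z. norm (\<Psi> j z) \<le> Bj j * norm z)"
    by metis
  obtain B\<Phi> where B\<Phi>: "B\<Phi> > 0" "\<And>z. norm (\<Phi> z) \<le> B\<Phi> * norm z"
    using linear_bounded_pos[OF lin\<Phi>] by metis
  define B where "B = B\<Phi> + (\<Sum>j\<in>J. Bj j)"
  have Bpos: "B > 0" unfolding B_def using B\<Phi> Bj by (simp add: add_pos_nonneg sum_nonneg less_imp_le)
  have BjB: "Bj j \<le> B" if "j \<in> J" for j
  proof -
    have "Bj j \<le> (\<Sum>j\<in>J. Bj j)" by (rule member_le_sum) (use Bj fin that in auto)
    then show ?thesis unfolding B_def using B\<Phi> by linarith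
  qed
  have B\<Psi>: "norm (\<Psi> j z) \<le> B * norm z" if "j \<in> J" for j z
    using Bj that BjB[OF that] by (meson mult_right_mono norm_ge_zero order_trans)
  have B\<Phi>': "norm (\<Phi> z) \<le> B * norm z" for z
    using B\<Phi> by (smt (verit) B_def Bj mult_right_mono norm_ge_zero sum_nonneg)
  have hd: "(\<gamma> has_derivative (\<lambda>h. h *\<^sub>R v)) (at 0)"
    using der by (simp add: has_vector_derivative_def)
  then obtain d1 where d1: "d1 > 0" "\<forall>y. norm (y - 0) < d1 \<longrightarrow>
       norm (\<gamma> y - \<gamma> 0 - (y - 0) *\<^sub>R v) \<le> 1 * norm (y - 0)"
    unfolding has_derivative_at_alt by (meson zero_less_one)
  define K where "K = norm v + 1"
  have Kpos: "K > 0" unfolding K_def by (simp add: add_nonneg_pos)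
  have Zb: "norm (\<gamma> t - \<gamma> 0) \<le> K * \<bar>t\<bar>" if "\<bar>t\<bar> < d1" for t
  proof -
    have "norm (\<gamma> t - \<gamma> 0 - t *\<^sub>R v) \<le> \<bar>t\<bar>" using d1 that by auto
    moreover have "norm (\<gamma> t - \<gamma> 0) \<le> norm (\<gamma> t - \<gamma> 0 - t *\<^sub>R v) + norm (t *\<^sub>R v)"
      by (metis diff_add_cancel norm_triangle_ineq)
    ultimately show ?thesis unfolding K_def by (simp add: algebra_simps)
  qed
  define \<epsilon> where "\<epsilon> = 1 / (2 * l + 2)"
  have lpos: "l \<ge> 0" unfolding l_def by simp
  have epos: "\<epsilon> > 0" unfolding \<epsilon>_def using lpos by simp
  have leps: "l * \<epsilon> \<le> 1/2" unfolding \<epsilon>_def using lpos by (simp add: field_simps)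
  define \<delta> where "\<delta> = min e (min d1 (\<epsilon> / (B * K)))"
  have dpos: "\<delta> > 0" unfolding \<delta>_def using e d1 epos Bpos Kpos by simp
  define c where "c = 2 * l * B * K * norm x * B * K"
  have main: "\<bar>inner x (\<Phi> (\<gamma> t))\<bar> \<le> c * t^2" if t: "\<bar>t\<bar> < \<delta>" for t
  proof -
    define Z where "Z = \<gamma> t - \<gamma> 0"
    have te: "\<bar>t\<bar> < e" and td1: "\<bar>t\<bar> < d1" and tB: "\<bar>t\<bar> \<le> \<epsilon> / (B * K)"
      using t unfolding \<delta>_def by auto
    have nZ: "norm Z \<le> K * \<bar>t\<bar>" unfolding Z_def using Zb td1 .
    have BKt: "B * (K * \<bar>t\<bar>) \<le> \<epsilon>" using tB Bpos Kpos by (simp add: field_simps)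
    define w where "w j = \<Psi> j Z" for j
    have yj: "\<Psi> j (\<gamma> t) = u j + w j" if "j \<in> J" for j
      using lin\<Psi> \<Psi>0 that unfolding w_def Z_def by (simp add: linear_diff)
    have nw: "norm (w j) \<le> B * (K * \<bar>t\<bar>)" if "j \<in> J" for j
      using B\<Psi>[OF that, of Z] nZ Bpos unfolding w_def
      by (meson mult_left_mono order_trans less_imp_le)
    have nw': "\<forall>j\<in>J. norm (w j) \<le> \<epsilon>" using nw BKt by (meson order_trans)
    have \<Phi>Z: "\<Phi> (\<gamma> t) = \<Phi> Z" unfolding Z_def using lin\<Phi> \<Phi>0 by (simp add: linear_diff)
    define y where "y j = u j + w j" for j
    have cb: "(\<Sum>j\<in>J. \<bar>a j\<bar>) \<le> 2 * l * norm (\<Sum>j\<in>J. a j *\<^sub>R y j)" for a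
      unfolding y_def l_def by (rule coeff_bound[OF fin uu nw']) (use leps in \<open>simp add: l_def\<close>)
    have inj: "inj_on y J"
    proof (rule inj_onI, rule ccontr)
      fix j k assume jk: "j \<in> J" "k \<in> J" "y j = y k" "j \<noteq> k"
      define a where "a i = (if i = j then 1 else 0) - (if i = k then 1 else (0::real))" for i
      have "(\<Sum>i\<in>J. a i *\<^sub>R y i) = (\<Sum>i\<in>J. (if i = j then y i else 0)) - (\<Sum>i\<in>J. (if i = k then y i else 0))"
      proof -
        have "(\<Sum>i\<in>J. a i *\<^sub>R y i) = (\<Sum>i\<in>J. (if i = j then y i else 0) - (if i = k then y i else 0))"
          by (rule sum.cong) (auto simp: a_def)
        then show ?thesis by (simp add: sum_subtractf)
      qed
      also have "\<dots> = 0" using jk fin by simp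
      finally have "(\<Sum>i\<in>J. \<bar>a i\<bar>) \<le> 0" using cb[of a] by simp
      moreover have "\<bar>a j\<bar> \<le> (\<Sum>i\<in>J. \<bar>a i\<bar>)" by (rule member_le_sum) (use jk fin in auto)
      moreover have "a j = 1" unfolding a_def using jk by simp
      ultimately show False by simp
    qed
    have ind: "independent (y ` J)"
    proof (rule independent_if_scalars_zero)
      show "finite (y ` J)" using fin by simp
    next
      fix f z assume s0: "(\<Sum>x\<in>y ` J. f x *\<^sub>R x) = 0" and z: "z \<in> y ` J"
      have "(\<Sum>j\<in>J. f (y j) *\<^sub>R y j) = 0" using s0 sum.reindex[OF inj, of "\<lambda>x. f x *\<^sub>R x"] by (simp add: comp_def)
      then have "(\<Sum>j\<in>J. \<bar>f (y j)\<bar>) \<le> 0" using cb[of "\<lambda>j. f (y j)"] by simp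
      moreover have "\<forall>j\<in>J. \<bar>f (y j)\<bar> \<le> (\<Sum>j\<in>J. \<bar>f (y j)\<bar>)"
        using fin by (intro ballI member_le_sum) auto
      ultimately show "f z = 0" using z by fastforce
    qed
    have sub: "y ` J \<subseteq> S t" using inS te yj unfolding y_def by auto
    have dimS: "dim (S t) \<le> card (y ` J)" using inS te card_image[OF inj] by simp
    have "S t \<subseteq> span (y ` J)" by (rule card_ge_dim_independent[OF sub ind dimS])
    then have "\<Phi> (\<gamma> t) \<in> span (y ` J)" using inS te by auto
    then obtain f where f: "\<Phi> (\<gamma> t) = (\<Sum>z\<in>y ` J. f z *\<^sub>R z)"
      using span_finite[of "y ` J"] fin by auto
    define a where "a j = f (y j)" for j
    have rep: "\<Phi> (\<gamma> t) = (\<Sum>j\<in>J. a j *\<^sub>R y j)"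
      using f sum.reindex[OF inj, of "\<lambda>x. f x *\<^sub>R x"] unfolding a_def by (simp add: comp_def)
    have ma: "(\<Sum>j\<in>J. \<bar>a j\<bar>) \<le> 2 * l * (B * (K * \<bar>t\<bar>))"
    proof -
      have "norm (\<Phi> (\<gamma> t)) \<le> B * (K * \<bar>t\<bar>)"
        using B\<Phi>'[of Z] \<Phi>Z nZ Bpos by (metis mult_left_mono order_trans less_imp_le)
      then show ?thesis using cb[of a] rep lpos
        by (smt (verit, best) mult_left_mono)
    qed
    have "inner x (\<Phi> (\<gamma> t)) = (\<Sum>j\<in>J. a j * inner x (w j))"
      unfolding rep y_def using xu by (simp add: inner_sum_right inner_add_right algebra_simps)
    then have "\<bar>inner x (\<Phi> (\<gamma> t))\<bar> \<le> (\<Sum>j\<in>J. \<bar>a j\<bar> * (norm x * (B * (K * \<bar>t\<bar>))))"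
    proof -
      assume eq: "inner x (\<Phi> (\<gamma> t)) = (\<Sum>j\<in>J. a j * inner x (w j))"
      have "\<bar>\<Sum>j\<in>J. a j * inner x (w j)\<bar> \<le> (\<Sum>j\<in>J. \<bar>a j * inner x (w j)\<bar>)" by (rule sum_abs)
      also have "\<dots> \<le> (\<Sum>j\<in>J. \<bar>a j\<bar> * (norm x * (B * (K * \<bar>t\<bar>))))"
      proof (rule sum_mono)
        fix j assume j: "j \<in> J"
        have "\<bar>inner x (w j)\<bar> \<le> norm x * norm (w j)" by (rule Cauchy_Schwarz_ineq2)
        also have "\<dots> \<le> norm x * (B * (K * \<bar>t\<bar>))" using nw[OF j] by (simp add: mult_left_mono)
        finally show "\<bar>a j * inner x (w j)\<bar> \<le> \<bar>a j\<bar> * (norm x * (B * (K * \<bar>t\<bar>)))"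
          by (simp add: abs_mult mult_left_mono)
      qed
      finally show ?thesis using eq by simp
    qed
    also have "\<dots> = (\<Sum>j\<in>J. \<bar>a j\<bar>) * (norm x * (B * (K * \<bar>t\<bar>)))" by (simp add: sum_distrib_right)
    also have "\<dots> \<le> (2 * l * (B * (K * \<bar>t\<bar>))) * (norm x * (B * (K * \<bar>t\<bar>)))"
      by (rule mult_right_mono[OF ma]) (use Bpos Kpos in simp)
    also have "\<dots> = c * t^2" unfolding c_def by (simp add: power2_eq_square algebra_simps)
    finally show ?thesis .
  qed
  have bl: "bounded_linear (\<lambda>z. inner x (\<Phi> z))"
    using bounded_linear_compose[OF bounded_linear_inner_right linear_conv_bounded_linear[THEN iffD1, OF lin\<Phi>]] .
  have hd2: "((\<lambda>t. inner x (\<Phi> (\<gamma> t))) has_derivative (\<lambda>h. inner x (\<Phi> (h *\<^sub>R v)))) (at 0)"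
    by (rule bounded_linear.has_derivative[OF bl hd])
  have "(\<lambda>h. inner x (\<Phi> (h *\<^sub>R v))) = (*) (inner x (\<Phi> v))"
    using lin\<Phi> by (auto simp: linear_scale)
  then have "((\<lambda>t. inner x (\<Phi> (\<gamma> t))) has_real_derivative inner x (\<Phi> v)) (at 0)"
    using hd2 by (simp add: has_field_derivative_def)
  moreover have "inner x (\<Phi> (\<gamma> 0)) = 0" using \<Phi>0 by simp
  ultimately show ?thesis
    by (rule deriv_zero_if_quadratic[OF _ _ dpos]) (use main in auto)
qed

definition mop :: "'d::finite \<Rightarrow> real^'i::finite^'i \<Rightarrow> ('d, 'i) tensor \<Rightarrow> ('d, 'i) tensor" where
  "mop e M X = (\<chi> f. \<Sum>i\<in>UNIV. M $ (f e) $ i * X $ (f(e := i)))"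

lemma mop_nth: "mop e M X $ f = (\<Sum>i\<in>UNIV. M $ (f e) $ i * X $ (f(e := i)))"
  by (simp add: mop_def)

lemma mop_id: "mop e (mat 1) X = X"
proof -
  have "(\<Sum>i\<in>UNIV. mat 1 $ (f e) $ i * X $ (f(e := i))) = X $ f" for f
  proof -
    have "(\<Sum>i\<in>UNIV. mat 1 $ (f e) $ i * X $ (f(e := i))) = (\<Sum>i\<in>UNIV. if f e = i then X $ (f(e := i)) else 0)"
      by (rule sum.cong) (auto simp: mat_def)
    then show ?thesis by simp
  qed
  then show ?thesis by (simp add: vec_eq_iff mop_nth)
qed

lemma mop_add_mat: "mop e (M + N) X = mop e M X + mop e N X"
  by (simp add: vec_eq_iff mop_nth distrib_right sum.distrib)

lemma mop_diff_mat: "mop e (M - N) X = mop e M X - mop e N X"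
  by (simp add: vec_eq_iff mop_nth left_diff_distrib sum_subtractf)

lemma mop_zero_mat: "mop e 0 X = 0"
  by (simp add: vec_eq_iff mop_nth)

lemma mop_linear: "linear (mop e M)"
  by (rule linearI) (simp_all add: vec_eq_iff mop_nth distrib_left sum.distrib sum_distrib_left mult.left_commute)

lemma mop_zero: "mop e M 0 = 0"
  by (simp add: vec_eq_iff mop_nth)

lemma mop_comp: "mop e M (mop e N X) = mop e (M ** N) X"
proof -
  have "(\<Sum>i\<in>UNIV. M $ (f e) $ i * (\<Sum>k\<in>UNIV. N $ i $ k * X $ (f(e := k))))
      = (\<Sum>k\<in>UNIV. (\<Sum>i\<in>UNIV. M $ (f e) $ i * N $ i $ k) * X $ (f(e := k)))" for f
  proof -
    have "(\<Sum>i\<in>UNIV. M $ (f e) $ i * (\<Sum>k\<in>UNIV. N $ i $ k * X $ (f(e := k))))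
      = (\<Sum>i\<in>UNIV. \<Sum>k\<in>UNIV. M $ (f e) $ i * N $ i $ k * X $ (f(e := k)))"
      by (simp add: sum_distrib_left mult.assoc)
    also have "\<dots> = (\<Sum>k\<in>UNIV. \<Sum>i\<in>UNIV. M $ (f e) $ i * N $ i $ k * X $ (f(e := k)))"
      by (rule sum.swap)
    also have "\<dots> = (\<Sum>k\<in>UNIV. (\<Sum>i\<in>UNIV. M $ (f e) $ i * N $ i $ k) * X $ (f(e := k)))"
      by (simp add: sum_distrib_right)
    finally show ?thesis .
  qed
  then show ?thesis by (simp add: vec_eq_iff mop_nth matrix_matrix_mult_def)
qed

lemma mop_commute:
  assumes "e \<noteq> e'"
  shows "mop e M (mop e' N X) = mop e' N (mop e M X)"
proof -
  have "(\<Sum>i\<in>UNIV. M $ (f e) $ i * (\<Sum>k\<in>UNIV. N $ (f e') $ k * X $ (f(e := i, e' := k))))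
      = (\<Sum>k\<in>UNIV. N $ (f e') $ k * (\<Sum>i\<in>UNIV. M $ (f e) $ i * X $ (f(e' := k, e := i))))" for f
  proof -
    have "(\<Sum>i\<in>UNIV. M $ (f e) $ i * (\<Sum>k\<in>UNIV. N $ (f e') $ k * X $ (f(e := i, e' := k))))
       = (\<Sum>i\<in>UNIV. \<Sum>k\<in>UNIV. N $ (f e') $ k * (M $ (f e) $ i * X $ (f(e' := k, e := i))))"
      using assms by (simp add: sum_distrib_left mult.left_commute fun_upd_twist)
    also have "\<dots> = (\<Sum>k\<in>UNIV. \<Sum>i\<in>UNIV. N $ (f e') $ k * (M $ (f e) $ i * X $ (f(e' := k, e := i))))"
      by (rule sum.swap)
    also have "\<dots> = (\<Sum>k\<in>UNIV. N $ (f e') $ k * (\<Sum>i\<in>UNIV. M $ (f e) $ i * X $ (f(e' := k, e := i))))"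
      by (simp add: sum_distrib_left)
    finally show ?thesis .
  qed
  then show ?thesis using assms by (simp add: vec_eq_iff mop_nth)
qed

lemma mop_adj:
  fixes e :: "'d::finite" and X Y :: "('d, 'i::finite) tensor"
  shows "inner (mop e M X) Y = inner X (mop e (transpose M) Y)"
proof -
  define \<phi> :: "('d \<Rightarrow> 'i) \<times> 'i \<Rightarrow> ('d \<Rightarrow> 'i) \<times> 'i" where "\<phi> p = ((fst p)(e := snd p), fst p e)" for p
  have "inner (mop e M X) Y = (\<Sum>(f, i)\<in>UNIV \<times> UNIV. M $ (f e) $ i * X $ (f(e := i)) * Y $ f)"
    by (simp add: inner_vec_def mop_nth sum_distrib_right sum.cartesian_product)
  also have "\<dots> = (\<Sum>(g, k)\<in>UNIV \<times> UNIV. X $ g * (M $ k $ (g e) * Y $ (g(e := k))))"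
    by (rule sum.reindex_bij_witness[of _ \<phi> \<phi>]) (auto simp: \<phi>_def)
  also have "\<dots> = inner X (mop e (transpose M) Y)"
    by (simp add: inner_vec_def mop_nth sum_distrib_left sum.cartesian_product transpose_def)
  finally show ?thesis .
qed

definition fib :: "'d \<Rightarrow> ('d::finite, 'i::finite) tensor \<Rightarrow> ('d \<Rightarrow> 'i) \<Rightarrow> real^'i" where
  "fib d X h = (\<chi> i. X $ (h(d := i)))"

lemma fib_nth: "fib d X h $ i = X $ (h(d := i))" by (simp add: fib_def)

lemma prod_split_at:
  fixes F :: "'d::finite \<Rightarrow> real"
  shows "(\<Prod>e\<in>UNIV. F e) = F d * (\<Prod>e\<in>UNIV - {d}. F e)"
  by (simp add: prod.remove)

lemma mlprod_nth: "mlprod V C $ f = (\<Sum>g\<in>UNIV. C $ g * (\<Prod>d\<in>UNIV. V d $ (f d) $ (g d)))"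
  by (simp add: mlprod_def)

lemma mop_mlprod: "mop e M (mlprod V C) = mlprod (V(e := M ** V e)) C"
proof -
  have "(\<Sum>i\<in>UNIV. M $ (f e) $ i * (\<Sum>g\<in>UNIV. C $ g * (\<Prod>d\<in>UNIV. V d $ ((f(e := i)) d) $ (g d))))
      = (\<Sum>g\<in>UNIV. C $ g * (\<Prod>d\<in>UNIV. (V(e := M ** V e)) d $ (f d) $ (g d)))" for f
  proof -
    have pe: "(\<Prod>d\<in>UNIV. V d $ ((f(e := i)) d) $ (g d)) = V e $ i $ (g e) * (\<Prod>d\<in>UNIV - {e}. V d $ (f d) $ (g d))" for i g
      by (subst prod_split_at[of _ e]) (auto intro!: prod.cong)
    have pe2: "(\<Prod>d\<in>UNIV. (V(e := M ** V e)) d $ (f d) $ (g d)) = (M ** V e) $ (f e) $ (g e) * (\<Prod>d\<in>UNIV - {e}. V d $ (f d) $ (g d))" for g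
      by (subst prod_split_at[of _ e]) (auto intro!: prod.cong)
    have "(\<Sum>i\<in>UNIV. M $ (f e) $ i * (\<Sum>g\<in>UNIV. C $ g * (\<Prod>d\<in>UNIV. V d $ ((f(e := i)) d) $ (g d))))
       = (\<Sum>i\<in>UNIV. \<Sum>g\<in>UNIV. C $ g * (M $ (f e) $ i * V e $ i $ (g e)) * (\<Prod>d\<in>UNIV - {e}. V d $ (f d) $ (g d)))"
      by (simp only: pe) (simp add: sum_distrib_left mult_ac)
    also have "\<dots> = (\<Sum>g\<in>UNIV. \<Sum>i\<in>UNIV. C $ g * (M $ (f e) $ i * V e $ i $ (g e)) * (\<Prod>d\<in>UNIV - {e}. V d $ (f d) $ (g d)))"
      by (rule sum.swap)
    also have "\<dots> = (\<Sum>g\<in>UNIV. C $ g * (\<Prod>d\<in>UNIV. (V(e := M ** V e)) d $ (f d) $ (g d)))"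
      by (simp only: pe2) (simp add: matrix_matrix_mult_def sum_distrib_left sum_distrib_right mult_ac)
    finally show ?thesis .
  qed
  then show ?thesis by (simp add: vec_eq_iff mop_nth mlprod_nth)
qed

lemma mlprod_zero_factor: "V e = 0 \<Longrightarrow> mlprod V C = 0"
  by (simp add: vec_eq_iff mlprod_nth prod_split_at[of _ e])

lemma fib_mlprod:
  "fib d (mlprod V C) h = (\<Sum>g\<in>UNIV. (C $ g * (\<Prod>e\<in>UNIV - {d}. V e $ (h e) $ (g e))) *\<^sub>R column (g d) (V d))"
proof -
  have "(\<Prod>e\<in>UNIV. V e $ ((h(d := i)) e) $ (g e)) = V d $ i $ (g d) * (\<Prod>e\<in>UNIV - {d}. V e $ (h e) $ (g e))" for i g
    by (subst prod_split_at[of _ d]) (auto intro!: prod.cong)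
  then show ?thesis
    by (simp add: vec_eq_iff fib_nth mlprod_nth sum_component column_def mult_ac)
qed

lemma fib_mlprod_span:
  assumes "mat_on K Ls (V d)"
  shows "fib d (mlprod V C) h \<in> span ((\<lambda>k. column k (V d)) ` Ls)"
proof -
  have "column j (V d) \<in> span ((\<lambda>k. column k (V d)) ` Ls)" for j
  proof (cases "j \<in> Ls")
    case True then show ?thesis by (intro span_base) auto
  next
    case False
    then have "column j (V d) = 0" using assms by (auto simp: mat_on_def column_def vec_eq_iff)
    then show ?thesis by (simp add: span_zero)
  qed
  then show ?thesis unfolding fib_mlprod by (intro span_sum span_scale) auto
qed

lemma dim_fib_mlprod:
  assumes "mat_on K Ls (V d)"
  shows "dim (span (range (fib d (mlprod V C)))) \<le> card Ls"
proof -
  have "span (range (fib d (mlprod V C))) \<subseteq> span ((\<lambda>k. column k (V d)) ` Ls)"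
    using fib_mlprod_span[of K Ls V d C] assms by (simp add: span_minimal image_subset_iff)
  then have "dim (span (range (fib d (mlprod V C)))) \<le> card ((\<lambda>k. column k (V d)) ` Ls)"
    by (intro dim_le_card) auto
  also have "\<dots> \<le> card Ls" by (rule card_image_le) simp
  finally show ?thesis .
qed

lemma column_mult: "column j (A ** B) = A *v column j B"
  by (simp add: vec_eq_iff column_def matrix_vector_mult_def matrix_matrix_mult_def)

lemma mat_diff_mult: "(A - B) ** C = A ** C - B ** (C::real^'n::finite^'n)"
  by (simp add: vec_eq_iff matrix_matrix_mult_def left_diff_distrib sum_subtractf)

lemma mult_id_on:
  fixes U :: "real^'i::finite^'i"
  assumes "mat_on K Ls U"
  shows "U ** id_on Ls = U"
proof -
  have "(\<Sum>k\<in>UNIV. U $ i $ k * (if k = j \<and> k \<in> Ls then 1 else 0)) = U $ i $ j" for i j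
  proof -
    have "(\<Sum>k\<in>UNIV. U $ i $ k * (if k = j \<and> k \<in> Ls then 1 else 0)) = (\<Sum>k\<in>UNIV. if k = j then (if j \<in> Ls then U $ i $ j else 0) else 0)"
      by (rule sum.cong) auto
    also have "\<dots> = U $ i $ j" using assms by (auto simp: mat_on_def)
    finally show ?thesis .
  qed
  then show ?thesis by (simp add: vec_eq_iff matrix_matrix_mult_def id_on_def)
qed

locale onb =
  fixes K Ls :: "'i::finite set" and U :: "real^'i^'i"
  assumes on: "mat_on K Ls U" and orth: "transpose U ** U = id_on Ls"
begin

definition "P = U ** transpose U"
definition "Q = mat 1 - P"

lemma P_eq: "P = U ** transpose U" by (simp add: P_def)

lemma P_sym: "transpose P = P"
  by (simp add: P_def matrix_transpose_mul)

lemma Q_sym: "transpose Q = Q"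
proof -
  have "P $ j $ i = P $ i $ j" for i j
    using arg_cong[OF P_sym, of "\<lambda>M. M $ i $ j"] by (simp add: transpose_def)
  then show ?thesis by (simp add: Q_def transpose_def vec_eq_iff mat_def)
qed

lemma PU: "P ** U = U"
  by (simp add: P_def matrix_mul_assoc[symmetric] orth mult_id_on[OF on])

lemma QU: "Q ** U = 0"
  by (simp add: Q_def mat_diff_mult PU)

lemma PP: "P ** P = P"
  by (metis P_def PU matrix_mul_assoc)

lemma PQ_id: "P + Q = mat 1"
  by (simp add: Q_def)

lemma uu: "j \<in> Ls \<Longrightarrow> k \<in> Ls \<Longrightarrow> inner (column j U) (column k U) = (if j = k then 1 else 0)"
proof -
  assume "j \<in> Ls" "k \<in> Ls"
  have "inner (column j U) (column k U) = (transpose U ** U) $ j $ k"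
    by (simp add: inner_vec_def column_def matrix_matrix_mult_def transpose_def)
  then show ?thesis using \<open>j \<in> Ls\<close> \<open>k \<in> Ls\<close> by (simp add: orth id_on_def)
qed

lemma Qu: "Q *v column j U = 0"
proof -
  have "Q *v column j U = column j (Q ** U)" by (simp add: column_mult)
  also have "\<dots> = 0" by (simp add: QU column_def vec_eq_iff)
  finally show ?thesis .
qed

end

lemma onb_cross:
  assumes "onb K1 L1 U1" "onb K2 L2 U2" "transpose U1 ** U2 = 0"
  shows "onb.P U1 ** onb.P U2 = 0"
proof -
  have "onb.P U1 ** onb.P U2 = U1 ** ((transpose U1 ** U2) ** transpose U2)"
    unfolding onb.P_eq[OF assms(1)] onb.P_eq[OF assms(2)] by (simp only: matrix_mul_assoc)
  also have "(transpose U1 ** U2) ** transpose U2 = 0" using assms(3)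
    by (simp add: vec_eq_iff matrix_matrix_mult_def)
  finally show ?thesis by (simp add: vec_eq_iff matrix_matrix_mult_def)
qed

lemma fib_upd: "fib d X (h(d := i)) = fib d X h"
  by (simp add: fib_def)

lemma gram_fib:
  fixes X :: "('d::finite, 'i::finite) tensor"
  shows "unfold_gram X d *v u = (\<Sum>h\<in>{h. h d = c}. inner (fib d X h) u *\<^sub>R fib d X h)"
proof -
  have "(\<Sum>k\<in>UNIV. (\<Sum>g\<in>{g. g d = i}. X $ g * X $ (g(d := k))) * u $ k)
      = (\<Sum>h\<in>{h. h d = c}. inner (fib d X h) u * X $ (h(d := i)))" for i
  proof -
    have "(\<Sum>k\<in>UNIV. (\<Sum>g\<in>{g. g d = i}. X $ g * X $ (g(d := k))) * u $ k)
       = (\<Sum>g\<in>{g. g d = i}. X $ g * inner (fib d X g) u)"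
    proof -
      have "(\<Sum>k\<in>UNIV. (\<Sum>g\<in>{g. g d = i}. X $ g * X $ (g(d := k))) * u $ k)
         = (\<Sum>k\<in>UNIV. \<Sum>g\<in>{g. g d = i}. X $ g * (X $ (g(d := k)) * u $ k))"
        by (simp add: sum_distrib_right mult.assoc)
      also have "\<dots> = (\<Sum>g\<in>{g. g d = i}. \<Sum>k\<in>UNIV. X $ g * (X $ (g(d := k)) * u $ k))"
        by (rule sum.swap)
      also have "\<dots> = (\<Sum>g\<in>{g. g d = i}. X $ g * inner (fib d X g) u)"
        by (simp add: sum_distrib_left inner_vec_def fib_nth)
      finally show ?thesis .
    qed
    also have "\<dots> = (\<Sum>h\<in>{h. h d = c}. inner (fib d X h) u * X $ (h(d := i)))"
      by (rule sum.reindex_bij_witness[of _ "\<lambda>h. h(d := i)" "\<lambda>g. g(d := c)"]) (auto simp: fib_upd)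
    finally show ?thesis .
  qed
  then show ?thesis
    by (simp add: vec_eq_iff unfold_gram_def matrix_vector_mult_def sum_component fib_nth)
qed

lemma fib_linear: "linear (\<lambda>X. fib d X h)"
  by (rule linearI) (simp_all add: vec_eq_iff fib_nth)

lemma fib_mop_other:
  assumes "d \<noteq> d'"
  shows "fib d (mop d' M X) f = (\<Sum>k\<in>UNIV. M $ (f d') $ k *\<^sub>R fib d X (f(d' := k)))"
  using assms by (simp add: vec_eq_iff fib_nth mop_nth sum_component fun_upd_twist)

lemma mop_entry_inner:
  "mop d M Y $ f = inner (\<chi> i. M $ (f d) $ i) (fib d Y f)"
  by (simp add: mop_nth inner_vec_def fib_nth)

lemma fib_add: "fib d (X + Y) h = fib d X h + fib d Y h"
  by (simp add: vec_eq_iff fib_nth)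

lemma fib_scaleR: "fib d (c *\<^sub>R X) h = c *\<^sub>R fib d X h"
  by (simp add: vec_eq_iff fib_nth)

lemma fib_zero: "fib d 0 h = 0"
  by (simp add: vec_eq_iff fib_nth)

lemma inner_row: "inner (\<chi> i. Q $ a $ i) w = (Q *v w) $ a"
  by (simp add: inner_vec_def matrix_vector_mult_def)

lemma hosvd_parts:
  assumes "compact_hosvd I Ls U C A"
  shows "\<forall>d. mat_on (I d) (Ls d) (U d) \<and> transpose (U d) ** U d = id_on (Ls d)
        \<and> (\<forall>j\<in>Ls d. \<exists>s>0. unfold_gram A d *v column j (U d) = s *\<^sub>R column j (U d))"
  using assms unfolding compact_hosvd_def by (rule conjunct1)

lemma hosvd_parts2: "compact_hosvd I Ls U C A \<Longrightarrow> A = mlprod U C"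
  unfolding compact_hosvd_def by (elim conjE)

lemma hosvd_onb: "compact_hosvd I Ls U C A \<Longrightarrow> onb (I e) (Ls e) (U e)"
  using hosvd_parts unfolding onb_def by blast

lemma tangent_W:
  fixes I Ls :: "'d::finite \<Rightarrow> 'i::finite set" and U :: "'d \<Rightarrow> real^'i^'i"
    and M :: "('d, 'i) tensor set" and A C v :: "('d, 'i) tensor"
  assumes hosvd: "compact_hosvd I Ls U C A"
    and v: "v \<in> tangent_space (structured_tucker M Ls I) A"
    and dd: "d \<noteq> d'"
  shows "mop d (onb.Q (U d)) (mop d' (onb.Q (U d')) v) = 0"
proof -
  have onbd: "onb (I d) (Ls d) (U d)" and onbd': "onb (I d') (Ls d') (U d')"
    using hosvd_onb[OF hosvd] by auto
  have AUC: "A = mlprod U C" using hosvd_parts2[OF hosvd] .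
  have "\<forall>j\<in>Ls d. \<exists>s>0. unfold_gram A d *v column j (U d) = s *\<^sub>R column j (U d)"
    using hosvd_parts[OF hosvd] by blast
  then obtain s where s: "\<forall>j\<in>Ls d. s j > 0 \<and> unfold_gram A d *v column j (U d) = s j *\<^sub>R column j (U d)"
    by metis
  have "\<exists>\<gamma> e. e > 0 \<and> smooth_on {-e<..<e} \<gamma> \<and> \<gamma> ` {-e<..<e} \<subseteq> structured_tucker M Ls I \<and>
      \<gamma> 0 = A \<and> (\<gamma> has_vector_derivative v) (at 0)"
    using v unfolding tangent_space_def by (rule CollectD)
  then obtain \<gamma> e where e: "e > 0" and \<gamma>M: "\<gamma> ` {-e<..<e} \<subseteq> structured_tucker M Ls I"
    and \<gamma>0: "\<gamma> 0 = A" and der: "(\<gamma> has_vector_derivative v) (at 0)"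
    by (elim exE conjE)
  define Q where "Q = onb.Q (U d)"
  define Q' where "Q' = onb.Q (U d')"
  define u where "u j = column j (U d)" for j
  define H :: "('d \<Rightarrow> 'i) set" where "H = {h. h d = undefined}"
  define \<Psi> where "\<Psi> j X = (1 / s j) *\<^sub>R (\<Sum>h\<in>H. inner (fib d A h) (u j) *\<^sub>R fib d X h)" for j X
  define \<Phi> where "\<Phi> X f = fib d (mop d' Q' X) f" for X f
  have "mop d Q (mop d' Q' v) $ f = 0" for f
  proof -
    define x where "x = (\<chi> i. Q $ (f d) $ i)"
    have ent: "mop d Q (mop d' Q' v) $ f = inner x (\<Phi> v f)"
      unfolding x_def \<Phi>_def by (rule mop_entry_inner)
    have "inner x (\<Phi> v f) = 0"
    proof (rule key_analytic[where \<gamma> = \<gamma> and J = "Ls d" and \<Psi> = \<Psi> and u = u and e = e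
          and S = "\<lambda>t. span (range (fib d (\<gamma> t)))"])
      show "(\<gamma> has_vector_derivative v) (at 0)" by (rule der)
      show "finite (Ls d)" by simp
      show "\<forall>j\<in>Ls d. linear (\<Psi> j)"
        by (intro ballI linearI) (simp_all add: \<Psi>_def fib_add fib_scaleR inner_add_left scaleR_add_left
              sum.distrib scaleR_sum_right algebra_simps)
      show "linear (\<lambda>X. \<Phi> X f)"
        unfolding \<Phi>_def using linear_compose[OF mop_linear fib_linear] by (simp add: comp_def)
      show "\<forall>j\<in>Ls d. \<Psi> j (\<gamma> 0) = u j"
      proof
        fix j assume j: "j \<in> Ls d"
        have "(\<Sum>h\<in>H. inner (fib d A h) (u j) *\<^sub>R fib d A h) = s j *\<^sub>R u j"
          using gram_fib[of A d "u j" undefined] s j unfolding H_def u_def by simp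
        moreover have "s j > 0" using s j by blast
        ultimately show "\<Psi> j (\<gamma> 0) = u j" unfolding \<Psi>_def \<gamma>0 by simp
      qed
      show "\<Phi> (\<gamma> 0) f = 0"
      proof -
        have "Q' ** U d' = 0" unfolding Q'_def by (rule onb.QU[OF onbd'])
        then have "mop d' Q' A = 0" unfolding AUC mop_mlprod by (intro mlprod_zero_factor[of _ d']) simp
        then show ?thesis unfolding \<Phi>_def \<gamma>0 by (simp add: fib_zero)
      qed
      show "\<forall>j\<in>Ls d. inner x (u j) = 0"
        unfolding x_def u_def inner_row Q_def using onb.Qu[OF onbd] by simp
      show "\<forall>j\<in>Ls d. \<forall>k\<in>Ls d. inner (u j) (u k) = (if j = k then 1 else 0)"
        unfolding u_def using onb.uu[OF onbd] by simp
      show "0 < e" by (rule e)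
      show "\<forall>t. \<bar>t\<bar> < e \<longrightarrow> dim (span (range (fib d (\<gamma> t)))) \<le> card (Ls d) \<and>
            (\<forall>j\<in>Ls d. \<Psi> j (\<gamma> t) \<in> span (range (fib d (\<gamma> t)))) \<and> \<Phi> (\<gamma> t) f \<in> span (range (fib d (\<gamma> t)))"
      proof (intro allI impI conjI ballI)
        fix t :: real assume t: "\<bar>t\<bar> < e"
        then have "t \<in> {-e<..<e}" by auto
        then have "\<gamma> t \<in> structured_tucker M Ls I" using \<gamma>M by blast
        then obtain V C' where VC: "\<gamma> t = mlprod V C'" "\<forall>d. full_rank_mat (I d) (Ls d) (V d)"
          unfolding structured_tucker_def by blast
        have "mat_on (I d) (Ls d) (V d)" using VC(2) by (simp add: full_rank_mat_def)
        then show "dim (span (range (fib d (\<gamma> t)))) \<le> card (Ls d)"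
          unfolding VC(1) by (rule dim_fib_mlprod)
      next
        fix t j
        show "\<Psi> j (\<gamma> t) \<in> span (range (fib d (\<gamma> t)))"
          unfolding \<Psi>_def by (intro span_scale span_sum span_base) auto
      next
        fix t
        show "\<Phi> (\<gamma> t) f \<in> span (range (fib d (\<gamma> t)))"
          unfolding \<Phi>_def fib_mop_other[OF dd] by (intro span_scale span_sum span_base) auto
      qed
    qed
    then show ?thesis using ent by simp
  qed
  then show ?thesis unfolding Q_def Q'_def by (simp add: vec_eq_iff)
qed

lemma mat_mult_diff: "A ** (B - C) = A ** B - A ** (C::real^'n::finite^'n)"
  by (simp add: vec_eq_iff matrix_matrix_mult_def right_diff_distrib sum_subtractf)

lemma mop_split: "mop e P X + mop e (mat 1 - P) X = X"
  by (simp add: mop_add_mat[symmetric] mop_id)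

lemma orth_W:
  fixes v w :: "('d::finite, 'i::finite) tensor"
    and a b c :: 'd
  assumes o1: "\<forall>e. onb (K e) (L1 e) (U1 e)" and o2: "\<forall>e. onb (K e) (L2 e) (U2 e)"
    and cross: "\<forall>e. transpose (U1 e) ** U2 e = 0"
    and Wv: "\<forall>x y. x \<noteq> y \<longrightarrow> mop x (onb.Q (U1 x)) (mop y (onb.Q (U1 y)) v) = 0"
    and Ww: "\<forall>x y. x \<noteq> y \<longrightarrow> mop x (onb.Q (U2 x)) (mop y (onb.Q (U2 y)) w) = 0"
    and abc: "a \<noteq> b" "a \<noteq> c" "b \<noteq> c"
  shows "inner v w = 0"
proof -
  define P where "P e = onb.P (U1 e)" for e
  define Q where "Q e = onb.Q (U1 e)" for e
  define Q2 where "Q2 e = onb.Q (U2 e)" for e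
  have Qe: "Q e = mat 1 - P e" for e unfolding Q_def P_def using onb.Q_def[OF o1[rule_format]] by simp
  have Psym: "transpose (P e) = P e" for e unfolding P_def using onb.P_sym[OF o1[rule_format]] .
  have PQ2: "P e ** Q2 e = P e" for e
  proof -
    have "P e ** onb.P (U2 e) = 0" unfolding P_def by (rule onb_cross[OF o1[rule_format] o2[rule_format] cross[rule_format]])
    then show ?thesis unfolding Q2_def onb.Q_def[OF o2[rule_format]] by (simp add: mat_mult_diff)
  qed
  have split: "X = mop e (P e) X + mop e (Q e) X" for e X
    using mop_split[of e "P e" X] by (simp add: Qe)
  have PQ2m: "mop e (P e) X = mop e (P e) (mop e (Q2 e) X)" for e X
    by (simp add: mop_comp PQ2)
  have key: "inner (mop x (P x) (mop y (P y) X)) w = 0" if xy: "x \<noteq> y" for x y X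
  proof -
    have "inner (mop x (P x) (mop y (P y) X)) w = inner X (mop y (P y) (mop x (P x) w))"
      by (simp add: mop_adj Psym)
    also have "mop y (P y) (mop x (P x) w) = mop y (P y) (mop x (P x) (mop x (Q2 x) w))"
      using PQ2m by metis
    also have "\<dots> = mop y (P y) (mop y (Q2 y) (mop x (P x) (mop x (Q2 x) w)))"
      using PQ2m by metis
    also have "\<dots> = mop y (P y) (mop x (P x) (mop y (Q2 y) (mop x (Q2 x) w)))"
      using mop_commute[of y x] xy by metis
    also have "mop y (Q2 y) (mop x (Q2 x) w) = 0" using Ww xy unfolding Q2_def by auto
    finally show ?thesis by (simp add: mop_zero)
  qed
  have Wv': "mop x (Q x) (mop y (Q y) v) = 0" if "x \<noteq> y" for x y
    using Wv that unfolding Q_def by auto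
  have t1: "inner (mop a (Q a) v) w = 0"
  proof -
    have "mop a (Q a) v = mop b (P b) (mop a (Q a) v)"
      using split[of "mop a (Q a) v" b] Wv'[of b a] abc by simp
    also have "\<dots> = mop c (P c) (mop b (P b) (mop a (Q a) v))"
    proof -
      have "mop c (Q c) (mop b (P b) (mop a (Q a) v)) = mop b (P b) (mop c (Q c) (mop a (Q a) v))"
        using mop_commute abc by metis
      also have "\<dots> = 0" using Wv'[of c a] abc by (simp add: mop_zero)
      finally show ?thesis using split[of "mop b (P b) (mop a (Q a) v)" c] by simp
    qed
    finally have eq: "mop a (Q a) v = mop c (P c) (mop b (P b) (mop a (Q a) v))" .
    have "inner (mop c (P c) (mop b (P b) (mop a (Q a) v))) w = 0" by (rule key) (use abc in auto)
    then show ?thesis by (subst eq)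
  qed
  have t2: "inner (mop a (P a) v) w = 0"
  proof -
    have "mop b (Q b) (mop a (P a) v) = mop a (P a) (mop b (Q b) v)"
      using mop_commute abc by metis
    also have "mop b (Q b) v = mop c (P c) (mop b (Q b) v)"
      using split[of "mop b (Q b) v" c] Wv'[of c b] abc by simp
    finally have e2: "mop b (Q b) (mop a (P a) v) = mop a (P a) (mop c (P c) (mop b (Q b) v))" .
    have "inner (mop a (P a) v) w = inner (mop b (P b) (mop a (P a) v)) w + inner (mop b (Q b) (mop a (P a) v)) w"
      using split[of "mop a (P a) v" b] by (metis inner_add_left)
    then show ?thesis using key[of b a] key[of a c] abc e2 by simp
  qed
  have "inner v w = inner (mop a (P a) v) w + inner (mop a (Q a) v) w"
    using split[of v a] by (metis inner_add_left)
  then show ?thesis using t1 t2 by simp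
qed

lemma mlprod_scale_factor: "mlprod (V(e0 := k *\<^sub>R V e0)) C = k *\<^sub>R mlprod V C"
proof -
  have "(\<Prod>d\<in>UNIV. (V(e0 := k *\<^sub>R V e0)) d $ (f d) $ (g d)) = k * (\<Prod>d\<in>UNIV. V d $ (f d) $ (g d))" for f g
  proof -
    have "(\<Prod>d\<in>UNIV. (V(e0 := k *\<^sub>R V e0)) d $ (f d) $ (g d))
        = (k * V e0 $ (f e0) $ (g e0)) * (\<Prod>d\<in>UNIV - {e0}. V d $ (f d) $ (g d))"
      by (subst prod_split_at[of _ e0]) (auto intro!: prod.cong)
    also have "\<dots> = k * (\<Prod>d\<in>UNIV. V d $ (f d) $ (g d))"
      by (simp only: prod_split_at[of "\<lambda>d. V d $ (f d) $ (g d)" e0] mult.assoc)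
    finally show ?thesis .
  qed
  then show ?thesis
    by (simp add: vec_eq_iff mlprod_nth sum_distrib_left mult_ac)
qed

lemma smat_vec: "(c *\<^sub>R A) *v x = c *\<^sub>R (A *v (x::real^'n::finite))"
  by (simp add: vec_eq_iff matrix_vector_mult_def sum_distrib_left mult.assoc)

lemma mat_svec: "A *v (c *\<^sub>R x) = c *\<^sub>R (A *v (x::real^'n::finite))"
  by (simp add: vec_eq_iff matrix_vector_mult_def sum_distrib_left mult_ac)

lemma rank_scale:
  fixes A :: "real^'n::finite^'m::finite"
  assumes "c \<noteq> 0"
  shows "rank (c *\<^sub>R A) = rank A"
proof -
  have "range (\<lambda>x. (c *\<^sub>R A) *v x) = range (\<lambda>x. A *v x)"
  proof (intro set_eqI iffI)
    fix y assume "y \<in> range (\<lambda>x. (c *\<^sub>R A) *v x)"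
    then obtain x where "y = (c *\<^sub>R A) *v x" by auto
    then have "y = A *v (c *\<^sub>R x)" by (simp add: smat_vec mat_svec)
    then show "y \<in> range (\<lambda>x. A *v x)" by auto
  next
    fix y assume "y \<in> range (\<lambda>x. A *v x)"
    then obtain x where "y = A *v x" by auto
    then have "y = (c *\<^sub>R A) *v ((1/c) *\<^sub>R x)" using assms by (simp add: smat_vec mat_svec)
    then show "y \<in> range (\<lambda>x. (c *\<^sub>R A) *v x)" by blast
  qed
  then show ?thesis by (simp add: rank_dim_range)
qed

lemma full_rank_scale:
  assumes "full_rank_mat K Ls A" "c \<noteq> 0"
  shows "full_rank_mat K Ls (c *\<^sub>R A)"
  using assms by (auto simp: full_rank_mat_def mat_on_def rank_scale)

lemma tucker_scale:
  assumes "X \<in> structured_tucker M Ls I" "k \<noteq> 0"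
  shows "k *\<^sub>R X \<in> structured_tucker M Ls I"
proof -
  from assms(1) obtain V C where VC: "X = mlprod V C" "C \<in> M" "\<forall>d. full_rank_mat (I d) (Ls d) (V d)"
    unfolding structured_tucker_def by blast
  define e0 where "e0 = (undefined :: 'a)"
  have "k *\<^sub>R X = mlprod (V(e0 := k *\<^sub>R V e0)) C" using VC(1) by (simp add: mlprod_scale_factor)
  moreover have "\<forall>d. full_rank_mat (I d) (Ls d) ((V(e0 := k *\<^sub>R V e0)) d)"
    using VC(3) full_rank_scale[OF _ assms(2)] by auto
  ultimately show ?thesis using VC(2) unfolding structured_tucker_def by blast
qed

lemma tangent_scale:
  fixes X :: "('d::finite, 'i::finite) tensor"
  assumes X: "X \<in> structured_tucker M Ls I"
  shows "c *\<^sub>R X \<in> tangent_space (structured_tucker M Ls I) X"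
proof -
  define e where "e = 1 / (\<bar>c\<bar> + 1)"
  have epos: "e > 0" unfolding e_def by (simp add: add_nonneg_pos)
  define \<gamma> where "\<gamma> t = (1 + t * c) *\<^sub>R X" for t
  define Df where "Df vs t = (case vs of [] \<Rightarrow> \<gamma> t | [k] \<Rightarrow> k *\<^sub>R (c *\<^sub>R X) | _ \<Rightarrow> 0)" for vs and t :: real
  have smooth: "smooth_on {-e<..<e} \<gamma>"
    unfolding smooth_on_def
  proof (intro conjI exI[of _ Df] ballI allI)
    show "open {-e<..<e}" by simp
  next
    fix x show "Df [] x = \<gamma> x" by (simp add: Df_def)
  next
    fix vs :: "real list" and x :: real
    show "(Df vs has_derivative (\<lambda>h. Df (h # vs) x)) (at x)"
    proof (cases vs)
      case Nil
      have "(\<gamma> has_derivative (\<lambda>h. (h * c) *\<^sub>R X)) (at x)"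
        unfolding \<gamma>_def by (auto intro!: derivative_eq_intros)
      moreover have "Df [] = \<gamma>" by (simp add: Df_def fun_eq_iff)
      moreover have "(\<lambda>h. Df [h] x) = (\<lambda>h. (h * c) *\<^sub>R X)" by (simp add: Df_def fun_eq_iff)
      ultimately show ?thesis using Nil by simp
    next
      case (Cons k rest)
      show ?thesis
      proof (cases rest)
        case Nil
        have "Df vs = (\<lambda>t. k *\<^sub>R (c *\<^sub>R X))" using Cons Nil by (simp add: Df_def fun_eq_iff)
        moreover have "(\<lambda>h. Df (h # vs) x) = (\<lambda>h. 0)" using Cons Nil by (simp add: Df_def fun_eq_iff)
        ultimately show ?thesis by (simp add: has_derivative_const)
      next
        case (Cons k2 rest2)
        have "Df vs = (\<lambda>t. 0)" using Cons \<open>vs = k # rest\<close> by (simp add: Df_def fun_eq_iff)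
        moreover have "(\<lambda>h. Df (h # vs) x) = (\<lambda>h. 0)" using \<open>vs = k # rest\<close> by (simp add: Df_def fun_eq_iff)
        ultimately show ?thesis by (simp add: has_derivative_const)
      qed
    qed
  qed
  have img: "\<gamma> ` {-e<..<e} \<subseteq> structured_tucker M Ls I"
  proof
    fix y assume "y \<in> \<gamma> ` {-e<..<e}"
    then obtain t where t0: "t \<in> {-e<..<e}" "y = \<gamma> t" by auto
    then have t: "\<bar>t\<bar> < e" "y = \<gamma> t" by auto
    have "\<bar>t * c\<bar> \<le> e * \<bar>c\<bar>" using t(1) by (simp add: abs_mult mult_right_mono)
    also have "\<dots> < 1" unfolding e_def by (simp add: field_simps)
    finally have "1 + t * c \<noteq> 0" by linarith
    then show "y \<in> structured_tucker M Ls I" unfolding t(2) \<gamma>_def by (rule tucker_scale[OF X])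
  qed
  have g0: "\<gamma> 0 = X" by (simp add: \<gamma>_def)
  have "(\<gamma> has_derivative (\<lambda>h. (h * c) *\<^sub>R X)) (at 0)"
    unfolding \<gamma>_def by (auto intro!: derivative_eq_intros)
  then have der: "(\<gamma> has_vector_derivative c *\<^sub>R X) (at 0)"
    by (simp add: has_vector_derivative_def)
  show ?thesis unfolding tangent_space_def using epos smooth img g0 der by blast
qed

lemma hosvd_nonzero:
  assumes h: "compact_hosvd I Ls U C A" and ne: "Ls d \<noteq> {}"
  shows "A \<noteq> 0"
proof
  assume A0: "A = 0"
  obtain j where j: "j \<in> Ls d" using ne by auto
  obtain s where s: "s > 0" "unfold_gram A d *v column j (U d) = s *\<^sub>R column j (U d)"
    using hosvd_parts[OF h] j by blast
  have "unfold_gram A d = 0" unfolding A0 by (simp add: unfold_gram_def vec_eq_iff)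
  then have "column j (U d) = 0" using s by simp
  moreover have "inner (column j (U d)) (column j (U d)) = 1"
    using onb.uu[OF hosvd_onb[OF h] j j] by simp
  ultimately show False by simp
qed

lemma three_modes:
  assumes "CARD('d::finite) \<ge> 3"
  obtains a b c :: "'d::finite" where "a \<noteq> b" "a \<noteq> c" "b \<noteq> c"
proof -
  define a :: 'd where "a = undefined"
  have "\<not> UNIV \<subseteq> {a}"
  proof
    assume "UNIV \<subseteq> {a}"
    then have "CARD('d) \<le> card {a}" by (intro card_mono) auto
    then show False using assms by simp
  qed
  then obtain b where b: "b \<noteq> a" by auto
  have "\<not> UNIV \<subseteq> {a, b}"
  proof
    assume "UNIV \<subseteq> {a, b}"
    then have "CARD('d) \<le> card {a, b}" by (intro card_mono) auto
    also have "\<dots> \<le> 2" by (simp add: card_insert_if)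
    finally show False using assms by simp
  qed
  then obtain c where "c \<notin> {a, b}" by auto
  then show ?thesis using that b by auto
qed

theorem proposition4p2:
  fixes R :: nat
    and I :: "'d::finite \<Rightarrow> 'i::finite set"
    and L :: "nat \<Rightarrow> 'd \<Rightarrow> 'i set"
    and Ms :: "nat \<Rightarrow> ('d, 'i) tensor set"
    and A C :: "nat \<Rightarrow> ('d, 'i) tensor"
    and U :: "nat \<Rightarrow> 'd \<Rightarrow> real^'i^'i"
  assumes "CARD('d) \<ge> 3"
    and "R \<ge> 1"
    and "\<forall>r<R. \<forall>d. L r d \<noteq> {}"
    and "\<forall>r<R. tucker_core_structure (L r) (Ms r)"
    and "\<forall>r<R. A r \<in> structured_tucker (Ms r) (L r) I"
    and "\<forall>r<R. compact_hosvd I (L r) (U r) (C r) (A r)"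
    and "\<forall>r1<R. \<forall>r2<R. r1 \<noteq> r2 \<longrightarrow> (\<forall>d. transpose (U r1 d) ** U r2 d = 0)"
  shows "kappa_sbtd R (\<lambda>r. tangent_space (structured_tucker (Ms r) (L r) I) (A r)) = 1"
proof -
  define TS where "TS r = tangent_space (structured_tucker (Ms r) (L r) I) (A r)" for r
  obtain a b c :: 'd where abc: "a \<noteq> b" "a \<noteq> c" "b \<noteq> c" using three_modes[OF assms(1)] by blast
  have W: "\<forall>x y. x \<noteq> y \<longrightarrow> mop x (onb.Q (U r x)) (mop y (onb.Q (U r y)) v) = 0"
    if "r < R" "v \<in> TS r" for r v
    using tangent_W[OF assms(6)[rule_format, OF \<open>r < R\<close>]] that unfolding TS_def by blast
  have orth: "inner v1 v2 = 0" if "r1 < R" "r2 < R" "r1 \<noteq> r2" "v1 \<in> TS r1" "v2 \<in> TS r2" for r1 r2 v1 v2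
  proof (rule orth_W[OF _ _ _ W[OF that(1,4)] W[OF that(2,5)] abc])
    show "\<forall>e. onb (I e) (L r1 e) (U r1 e)" using hosvd_onb assms(6) that by blast
    show "\<forall>e. onb (I e) (L r2 e) (U r2 e)" using hosvd_onb assms(6) that by blast
    show "\<forall>e. transpose (U r1 e) ** U r2 e = 0" using assms(7) that by blast
  qed
  define S where "S = {norm (\<Sum>r<R. v r) | v. (\<forall>r<R. v r \<in> TS r) \<and> (\<Sum>r<R. (norm (v r))\<^sup>2) = 1}"
  have "S = {1}"
  proof (intro set_eqI iffI)
    fix z :: real assume "z \<in> S"
    then obtain v where v: "z = norm (\<Sum>r<R. v r)" "\<forall>r<R. v r \<in> TS r" "(\<Sum>r<R. (norm (v r))\<^sup>2) = 1"
      unfolding S_def by blast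
    have "pairwise (\<lambda>i j. orthogonal (v i) (v j)) {..<R}"
      unfolding pairwise_def orthogonal_def using orth v(2) by auto
    then have "(norm (\<Sum>r<R. v r))\<^sup>2 = 1" using norm_sum_Pythagorean[of "{..<R}" v] v(3) by simp
    then have "z = 1" using v(1) norm_ge_zero[of "\<Sum>r<R. v r"] by (auto simp: power2_eq_1_iff)
    then show "z \<in> {1}" by simp
  next
    fix z :: real assume "z \<in> {1}"
    then have z: "z = 1" by simp
    have R0: "0 < R" using assms(2) by simp
    define w where "w = (1 / norm (A 0)) *\<^sub>R A 0"
    have A0: "A 0 \<noteq> 0"
      using hosvd_nonzero[OF assms(6)[rule_format, OF R0]] assms(3) R0 by blast
    have nw: "norm w = 1" unfolding w_def using A0 by simp
    define v where "v r = (if r = 0 then w else 0)" for r :: nat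
    have vT: "\<forall>r<R. v r \<in> TS r"
    proof (intro allI impI)
      fix r assume r: "r < R"
      have "c' *\<^sub>R A r \<in> TS r" for c'
        unfolding TS_def by (rule tangent_scale) (use assms(5) r in blast)
      from this[of "1 / norm (A 0)"] this[of 0] show "v r \<in> TS r"
        unfolding v_def w_def by (cases "r = 0") auto
    qed
    have sv: "(\<Sum>r<R. v r) = w"
      unfolding v_def using R0 by (simp add: sum.delta')
    have sn: "(\<Sum>r<R. (norm (v r))\<^sup>2) = 1"
    proof -
      have "(\<Sum>r<R. (norm (v r))\<^sup>2) = (\<Sum>r<R. if r = 0 then 1 else 0)"
        by (rule sum.cong) (auto simp: v_def nw)
      then show ?thesis using R0 by simp
    qed
    have "norm (\<Sum>r<R. v r) = 1" using sv nw by simp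
    then show "z \<in> S" unfolding S_def z mem_Collect_eq
      by (intro exI[of _ v] conjI) (use vT sn in auto)
  qed
  then have "terracini_sigma_min R TS = 1" unfolding terracini_sigma_min_def S_def by simp
  then show ?thesis unfolding kappa_sbtd_def TS_def by (simp add: one_ereal_def)
qed

end
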